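(* Let $\mathcal D=\mathcal Z=\{0,1\}$ and suppose that $$4\,f_{0,0}(y_0)\,f_{1,1}(y_1)>\Big(\frac{\overline\lambda}{\underline\lambda}\Big)^{p+1}\big(f_{0,1}(y_0)+f_{1,0}(y_1)\big)^2$$ holds for Lebesgue-almost all $(y_0,y_1)\in\mathcal Y_0\times\mathcal Y_1$. Then for $\mu$-almost all $u\in\mathcal U$ and all $(\xi_0,\xi_1)\in\mathbb R^{p\times2}\setminus\{0\}$, $$\sum_{d\in\mathcal D,\,z\in\mathcal Z}f_{d,z}(q_d^\ast(u))\det(Dq_d^\ast(u))\,\xi_z^\top(Dq_d^\ast(u))^{-1}\xi_d>0.$$
   Context: $\mathcal U\subset\mathbb R^p$ compact convex with piecewise $C^1$ boundary; $\mu$ a probability measure with support $\mathcal U$, absolutely continuous w.r.t. Lebesgue measure. $f_{d,z}\ge0$ are the functions $f_{d,z}(y):=\frac{\partial^p}{\partial y_1\cdots\partial y_p}\mathbb P(Y\le y,D=d\mid Z=z)$ for observed $(Y,D,Z)$. For fixed constants $\overline\lambda>\underline\lambda>0$, $q_d^\ast:\mathcal U\to\mathbb R^p$ ($d=0,1$) are $C^2$ with $Dq_d^\ast$ symmetric positive definite and all eigenvalues in $(\underline\lambda,\overline\lambda)$, $q_d^\ast(\mathcal U)=\mathcal Y_d$, and the pushforward of $\mu$ under $q_d^\ast$ is the law of $Y_d$ (so that $\mathcal Y_d$ is the support of $Y_d$ and $\mu$-null sets correspond to Lebesgue-null sets of $\mathcal Y_d$ under $q_d^\ast$). *)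

theory Defs
  imports "HOL-Probability.Probability"
begin

definition measure_support :: "('a::metric_space) measure \<Rightarrow> 'a set" where
  "measure_support M = {x. \<forall>e>0. emeasure M (ball x e) > 0}"

definition C1_within :: "('a::euclidean_space) set \<Rightarrow> ('a \<Rightarrow> real) \<Rightarrow> bool" where
  "C1_within U g \<longleftrightarrow> (\<exists>G. (\<forall>u\<in>U. (g has_derivative (\<lambda>h. G u \<bullet> h)) (at u within U))
                         \<and> continuous_on U G)"

definition C2_with_jacobian ::
  "(real^'n) set \<Rightarrow> (real^'n \<Rightarrow> real^'n) \<Rightarrow> (real^'n \<Rightarrow> real^'n^'n) \<Rightarrow> bool" where
  "C2_with_jacobian U q Dq \<longleftrightarrow>
     (\<forall>u\<in>U. (q has_derivative (\<lambda>h. Dq u *v h)) (at u within U))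
     \<and> (\<forall>i j. C1_within U (\<lambda>u. Dq u $ i $ j))"

definition is_eigenvalue :: "real^'n^'n \<Rightarrow> real \<Rightarrow> bool" where
  "is_eigenvalue A c \<longleftrightarrow> (\<exists>v. v \<noteq> 0 \<and> A *v v = c *\<^sub>R v)"

end

theory Submission
  imports Defs
begin

lemma sym_dot:
  fixes A :: "real^'n^'n"
  assumes "transpose A = A"
  shows "(A *v x) \<bullet> y = x \<bullet> (A *v y)"
proof -
  have "x \<bullet> (A *v y) = (x v* A) \<bullet> y" by (simp add: dot_lmul_matrix)
  also have "x v* A = transpose A *v x" by simp
  finally show ?thesis using assms by simp
qed

lemma quad_expand:
  fixes A :: "real^'n^'n"
  assumes "transpose A = A"
  shows "(x + t *\<^sub>R w) \<bullet> (A *v (x + t *\<^sub>R w)) = x \<bullet> (A *v x) + 2 * t * (w \<bullet> (A *v x)) + t^2 * (w \<bullet> (A *v w))"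
proof -
  have s: "x \<bullet> (A *v w) = w \<bullet> (A *v x)" using sym_dot[OF assms, of w x] by (simp add: inner_commute)
  show ?thesis
    by (simp add: matrix_vector_right_distrib matrix_vector_mult_scaleR inner_add_left inner_add_right s power2_eq_square algebra_simps)
qed

lemma eig_step:
  fixes A :: "real^'n^'n" and S :: "(real^'n) set"
  assumes sym: "transpose A = A" and fin: "finite S" and card: "card S < CARD('n)"
    and eig: "\<And>s. s \<in> S \<Longrightarrow> \<exists>c. A *v s = c *\<^sub>R s"
  shows "\<exists>v. norm v = 1 \<and> (\<forall>s\<in>S. v \<bullet> s = 0) \<and> (\<exists>c. A *v v = c *\<^sub>R v)"
proof -
  define W where "W = (\<Inter>s\<in>S. {x. s \<bullet> x = 0}) \<inter> sphere 0 1"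
  have "dim S \<le> card S" using dim_le_card[OF span_superset fin] .
  then have dS: "dim S < DIM(real^'n)" using card by simp
  obtain x :: "real^'n" where x: "x \<noteq> 0" "\<And>y. y \<in> span S \<Longrightarrow> orthogonal x y"
    using orthogonal_to_subspace_exists[OF dS] by metis
  have "sgn x \<in> W" using x unfolding W_def
    by (auto simp: norm_sgn sgn_div_norm orthogonal_def span_base inner_commute)
  then have Wne: "W \<noteq> {}" by blast
  have cW: "compact W" unfolding W_def
    by (intro closed_Int_compact closed_INT compact_sphere) (simp add: closed_hyperplane)
  have "continuous_on W (\<lambda>x. x \<bullet> (A *v x))" by (intro continuous_intros)
  from continuous_attains_sup[OF cW Wne this] obtain v where
    vW: "v \<in> W" and vmax: "\<And>y. y \<in> W \<Longrightarrow> y \<bullet> (A *v y) \<le> v \<bullet> (A *v v)" by blast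
  define lam where "lam = v \<bullet> (A *v v)"
  have nv: "norm v = 1" and vS: "\<And>s. s \<in> S \<Longrightarrow> s \<bullet> v = 0" using vW by (auto simp: W_def)
  have vv: "v \<bullet> v = 1" using nv by (simp add: power2_norm_eq_inner[symmetric])
  have L: "w \<bullet> (A *v v) = 0" if wS: "\<forall>s\<in>S. s \<bullet> w = 0" and wv: "w \<bullet> v = 0" for w
  proof -
    define a where "a = w \<bullet> (A *v v)"
    define B where "B = lam * (w \<bullet> w) - w \<bullet> (A *v w)"
    have key: "2 * t * a \<le> t^2 * B" for t
    proof -
      define y where "y = v + t *\<^sub>R w"
      have ny: "y \<bullet> y = 1 + t^2 * (w \<bullet> w)" using vv wv
        by (simp add: y_def inner_add_left inner_add_right inner_commute power2_eq_square algebra_simps)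
      have ypos: "y \<bullet> y > 0" unfolding ny by (simp add: add_pos_nonneg)
      hence yn0: "y \<noteq> 0" by auto
      have sy: "s \<bullet> y = 0" if "s \<in> S" for s using vS[OF that] wS that
        by (simp add: y_def inner_add_right)
      have "sgn y \<in> W" using yn0 sy by (auto simp: W_def norm_sgn sgn_div_norm)
      hence "sgn y \<bullet> (A *v sgn y) \<le> lam" using vmax lam_def by blast
      moreover have "sgn y \<bullet> (A *v sgn y) = (y \<bullet> (A *v y)) / (y \<bullet> y)"
        by (simp add: sgn_div_norm matrix_vector_mult_scaleR divide_inverse power2_norm_eq_inner[symmetric] power2_eq_square)
      ultimately have "y \<bullet> (A *v y) \<le> lam * (y \<bullet> y)" using ypos by (simp add: divide_le_eq)
      moreover have "y \<bullet> (A *v y) = lam + 2 * t * a + t^2 * (w \<bullet> (A *v w))"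
        unfolding y_def quad_expand[OF sym] a_def lam_def ..
      ultimately show ?thesis unfolding ny B_def by (simp add: algebra_simps)
    qed
    show ?thesis
    proof (rule ccontr)
      assume "w \<bullet> (A *v v) \<noteq> 0"
      hence a0: "a \<noteq> 0" by (simp add: a_def)
      define d where "d = \<bar>B\<bar> + 1"
      define t where "t = a / d"
      have d: "d > 0" by (simp add: d_def)
      have "2 * t * a * d^2 \<le> t^2 * B * d^2"
        by (rule mult_right_mono[OF key]) simp
      moreover have "2 * t * a * d^2 = 2 * a * a * d"
        using d by (simp add: t_def power2_eq_square field_simps)
      moreover have "t^2 * B * d^2 = a * a * B"
        using d by (simp add: t_def power2_eq_square field_simps)
      ultimately have "2 * a * a * d \<le> a * a * B" by simp
      moreover have "a * a > 0" using a0 by (simp add: zero_less_mult_iff linorder_neq_iff) blast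
      ultimately have "(a * a) * (2 * d) \<le> (a * a) * B \<and> a * a > 0" by (simp add: algebra_simps)
      hence "2 * d \<le> B" using mult_le_cancel_left_pos by blast
      thus False by (simp add: d_def)
    qed
  qed
  define w where "w = A *v v - lam *\<^sub>R v"
  have wS: "\<forall>s\<in>S. s \<bullet> w = 0"
  proof
    fix s assume "s \<in> S"
    then obtain c where c: "A *v s = c *\<^sub>R s" using eig by blast
    have "s \<bullet> (A *v v) = (A *v s) \<bullet> v" using sym_dot[OF sym, of s v] by simp
    also have "\<dots> = 0" using c vS[OF \<open>s\<in>S\<close>] by simp
    finally show "s \<bullet> w = 0" using vS[OF \<open>s\<in>S\<close>] by (simp add: w_def inner_diff_right)
  qed
  have wv: "w \<bullet> v = 0" using vv
    by (simp add: w_def inner_diff_left lam_def inner_commute inner_diff_right)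
  have "w \<bullet> (A *v v) = 0" by (rule L[OF wS wv])
  hence "w \<bullet> w = 0" using wv by (simp add: w_def inner_diff_right inner_diff_left) 
  hence "w = 0" by simp
  hence "A *v v = lam *\<^sub>R v" by (simp add: w_def)
  moreover have "\<forall>s\<in>S. v \<bullet> s = 0" using vS by (simp add: inner_commute)
  ultimately show ?thesis using nv by (intro exI[of _ v] conjI) auto
qed


lemma eig_basis:
  fixes A :: "real^'n^'n"
  assumes sym: "transpose A = A"
  shows "\<exists>e::'n \<Rightarrow> real^'n. (\<forall>i. norm (e i) = 1 \<and> (\<exists>c. A *v e i = c *\<^sub>R e i)) \<and> (\<forall>i j. i \<noteq> j \<longrightarrow> e i \<bullet> e j = 0)"
proof -
  have "\<exists>e::'n \<Rightarrow> real^'n. (\<forall>i\<in>I. norm (e i) = 1 \<and> (\<exists>c. A *v e i = c *\<^sub>R e i)) \<and> (\<forall>i\<in>I. \<forall>j\<in>I. i \<noteq> j \<longrightarrow> e i \<bullet> e j = 0)"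
    if "finite I" for I :: "'n set"
    using that
  proof (induction I rule: finite_induct)
    case empty show ?case by simp
  next
    case (insert i I)
    from insert.IH obtain e :: "'n \<Rightarrow> real^'n" where e: "\<forall>i\<in>I. norm (e i) = 1 \<and> (\<exists>c. A *v e i = c *\<^sub>R e i)"
      "\<forall>i\<in>I. \<forall>j\<in>I. i \<noteq> j \<longrightarrow> e i \<bullet> e j = 0" by (elim exE conjE) (rule that)
    have "card (e ` I) \<le> card I" by (rule card_image_le[OF insert(1)])
    also have "\<dots> < card (insert i I)" using insert by simp
    also have "\<dots> \<le> CARD('n)" by (rule card_mono) simp_all
    finally have cI: "card (e ` I) < CARD('n)" .
    have ee: "\<And>s. s \<in> e ` I \<Longrightarrow> \<exists>c. A *v s = c *\<^sub>R s" using e(1) by blast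
    obtain v where v: "norm v = 1" "\<forall>s\<in>e ` I. v \<bullet> s = 0" "\<exists>c. A *v v = c *\<^sub>R v"
      using eig_step[OF sym finite_imageI[OF insert(1)] cI ee] by blast
    show ?case
    proof -
    have P1: "\<forall>j\<in>insert i I. norm ((e(i := v)) j) = 1 \<and> (\<exists>c. A *v (e(i := v)) j = c *\<^sub>R (e(i := v)) j)"
    proof
      fix j assume "j \<in> insert i I"
      show "norm ((e(i := v)) j) = 1 \<and> (\<exists>c. A *v (e(i := v)) j = c *\<^sub>R (e(i := v)) j)"
      proof (cases "j = i")
        case True thus ?thesis using v(1,3) by simp
      next
        case False thus ?thesis using e(1) \<open>j \<in> insert i I\<close> by simp
      qed
    qed
    have P2: "\<forall>j\<in>insert i I. \<forall>k\<in>insert i I. j \<noteq> k \<longrightarrow> (e(i := v)) j \<bullet> (e(i := v)) k = 0"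
    proof (intro ballI impI)
      fix j k assume jk: "j \<in> insert i I" "k \<in> insert i I" "j \<noteq> k"
      show "(e(i := v)) j \<bullet> (e(i := v)) k = 0"
      proof (cases "j = i")
        case True
        hence "k \<in> I" using jk by auto
        hence "k \<noteq> i" using insert(2) by auto
        have "v \<bullet> e k = 0" using v(2) \<open>k \<in> I\<close> by blast
        thus ?thesis using True \<open>k \<noteq> i\<close> by simp
      next
        case False
        hence jI: "j \<in> I" using jk by auto
        show ?thesis
        proof (cases "k = i")
          case True
          have "v \<bullet> e j = 0" using v(2) jI by blast
          thus ?thesis using True False by (simp add: inner_commute)
        next
          case False2: False
          hence "k \<in> I" using jk by auto
          thus ?thesis using e(2) jI jk(3) False False2 by simp
        qed
      qed
    qed
    show ?thesis by (intro exI[of _ "e(i := v)"] conjI P1 P2)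
    qed
  qed
  from this[of UNIV] show ?thesis by simp
qed

lemma tr_dot:
  fixes M :: "real^'n^'n"
  shows "(M *v y) \<bullet> z = y \<bullet> (transpose M *v z)"
  by (metis dot_lmul_matrix vector_transpose_matrix)

lemma spec_decomp:
  fixes A :: "real^'n^'n"
  assumes sym: "transpose A = A"
  obtains P :: "real^'n^'n" and lam :: "'n \<Rightarrow> real"
  where "transpose P ** P = mat 1" "P ** transpose P = mat 1"
    "A = P ** (\<chi> r c. if r = c then lam r else 0) ** transpose P"
    "\<And>i. is_eigenvalue A (lam i)"
proof -
  obtain e :: "'n \<Rightarrow> real^'n" where e1: "\<And>i. norm (e i) = 1" and e2: "\<And>i. \<exists>c. A *v e i = c *\<^sub>R e i"
    and e3: "\<And>i j. i \<noteq> j \<Longrightarrow> e i \<bullet> e j = 0"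
    using eig_basis[OF sym] by blast
  define lam where "lam i = e i \<bullet> (A *v e i)" for i
  have ee: "e i \<bullet> e i = 1" for i using e1[of i] by (simp add: power2_norm_eq_inner[symmetric])
  have Ae: "A *v e i = lam i *\<^sub>R e i" for i
  proof -
    obtain c where c: "A *v e i = c *\<^sub>R e i" using e2 by blast
    hence "lam i = c" using ee[of i] by (simp add: lam_def)
    thus ?thesis using c by simp
  qed
  have eig: "is_eigenvalue A (lam i)" for i
    unfolding is_eigenvalue_def using Ae[of i] e1[of i] by (intro exI[of _ "e i"]) auto
  define P :: "real^'n^'n" where "P = (\<chi> r c. e c $ r)"
  have eij: "e i \<bullet> e j = (if i = j then 1 else 0)" for i j using ee e3 by auto
  have PtP: "transpose P ** P = mat 1"
  proof -
    have "(transpose P ** P) $ i $ j = mat 1 $ i $ j" for i j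
      using eij[of i j] by (simp add: P_def matrix_matrix_mult_def transpose_def mat_def inner_vec_def)
    thus ?thesis by (simp add: vec_eq_iff)
  qed
  have PPt: "P ** transpose P = mat 1" using PtP matrix_left_right_inverse by blast
  define D :: "real^'n^'n" where "D = (\<chi> r c. if r = c then lam r else 0)"
  have AP: "A ** P = P ** D"
  proof -
    have "(A ** P) $ r $ c = (P ** D) $ r $ c" for r c
    proof -
      have "(A ** P) $ r $ c = (A *v e c) $ r"
        by (simp add: P_def matrix_matrix_mult_def matrix_vector_mult_def)
      also have "\<dots> = lam c * e c $ r" by (simp add: Ae)
      also have "\<dots> = (P ** D) $ r $ c"
        by (simp add: P_def D_def matrix_matrix_mult_def if_distrib cong: if_cong)
      finally show ?thesis .
    qed
    thus ?thesis by (simp add: vec_eq_iff)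
  qed
  have "A = A ** (P ** transpose P)" by (simp add: PPt)
  also have "\<dots> = (P ** D) ** transpose P" by (simp add: matrix_mul_assoc AP)
  finally have "A = P ** D ** transpose P" .
  hence "A = P ** (\<chi> r c. if r = c then lam r else 0) ** transpose P" by (simp add: D_def)
  from that[OF PtP PPt this eig] show ?thesis .
qed


lemma spec_bounds:
  fixes A :: "real^'n^'n"
  assumes sym: "transpose A = A" and lo: "0 < lo"
    and eigb: "\<And>c. is_eigenvalue A c \<Longrightarrow> lo < c \<and> c < hi"
  shows "lo ^ CARD('n) < det A \<and> det A < hi ^ CARD('n)"
    and "\<And>x. x \<noteq> 0 \<Longrightarrow> lo * (x \<bullet> x) < x \<bullet> (A *v x) \<and> x \<bullet> (A *v x) < hi * (x \<bullet> x)"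
proof -
  obtain P :: "real^'n^'n" and lam where PtP: "transpose P ** P = mat 1" and PPt: "P ** transpose P = mat 1"
    and Aeq0: "A = P ** (\<chi> r c. if r = c then lam r else 0) ** transpose P"
    and eig: "\<And>i. is_eigenvalue A (lam i)"
    using spec_decomp[OF sym] by blast
  define D :: "real^'n^'n" where "D = (\<chi> r c. if r = c then lam r else 0)"
  have Aeq: "A = P ** D ** transpose P" using Aeq0 by (simp add: D_def)
  have lb: "lo < lam i" "lam i < hi" for i using eigb[OF eig[of i]] by auto
  have lpos: "0 < lam i" for i using lb(1)[of i] lo by linarith
  have hpos: "0 < hi" using lb(2)[of undefined] lpos[of undefined] by linarith
  have detD: "det D = (\<Prod>i\<in>UNIV. lam i)" by (simp add: D_def det_diagonal)
  have "det P * det (transpose P) = 1"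
    using arg_cong[OF PPt, of det] by (simp add: det_mul det_I)
  hence detA: "det A = (\<Prod>i\<in>UNIV. lam i)" unfolding Aeq det_mul detD by (simp add: algebra_simps)
  obtain i0 :: 'n where True by simp
  have "(\<Prod>i\<in>(UNIV::'n set). lo) < (\<Prod>i\<in>UNIV. lam i)"
    by (rule prod_mono_strict[of i0]) (use lb lo lpos hpos in \<open>auto intro: less_imp_le\<close>)
  moreover have "(\<Prod>i\<in>UNIV. lam i) < (\<Prod>i\<in>(UNIV::'n set). hi)"
    by (rule prod_mono_strict[of i0]) (use lb lo lpos hpos in \<open>auto intro: less_imp_le\<close>)
  ultimately show "lo ^ CARD('n) < det A \<and> det A < hi ^ CARD('n)" by (simp add: detA)
  fix x :: "real^'n" assume x0: "x \<noteq> 0"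
  define y where "y = transpose P *v x"
  have xP: "x = P *v y" by (simp only: y_def matrix_vector_mul_assoc PPt matrix_vector_mul_lid)
  have y0: "y \<noteq> 0" using x0 xP by auto
  have xx: "x \<bullet> x = y \<bullet> y"
    unfolding xP tr_dot by (simp add: matrix_vector_mul_assoc PtP del: transpose_matrix_vector)
  have "A *v x = P *v (D *v y)" by (simp add: Aeq y_def matrix_vector_mul_assoc matrix_mul_assoc del: transpose_matrix_vector)
  hence xAx: "x \<bullet> (A *v x) = y \<bullet> (D *v y)"
    by (simp add: xP tr_dot matrix_vector_mul_assoc matrix_mul_assoc PtP del: transpose_matrix_vector)
  have Dy: "D *v y = (\<chi> i. lam i * y $ i)"
    proof -
    have "(\<Sum>j\<in>UNIV. (if i = j then lam i else 0) * y $ j) = lam i * y $ i" for i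
      by (simp add: if_distrib[of "\<lambda>z. z * _"] cong: if_cong)
    thus ?thesis by (simp add: D_def matrix_vector_mult_def vec_eq_iff)
  qed
  have yDy: "y \<bullet> (D *v y) = (\<Sum>i\<in>UNIV. lam i * (y $ i)^2)"
    by (simp add: Dy inner_vec_def power2_eq_square algebra_simps)
  have yy: "y \<bullet> y = (\<Sum>i\<in>UNIV. (y $ i)^2)"
    by (simp add: inner_vec_def power2_eq_square)
  obtain j where yj: "y $ j \<noteq> 0" using y0 by (metis vec_eq_iff zero_index)
  have yj2: "(y $ j)^2 > 0" using yj by simp
  have "(\<Sum>i\<in>UNIV. lo * (y $ i)^2) < (\<Sum>i\<in>UNIV. lam i * (y $ i)^2)"
  proof (rule sum_strict_mono_ex1)
    show "\<forall>i\<in>UNIV. lo * (y $ i)^2 \<le> lam i * (y $ i)^2"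
      using lb(1) by (metis less_imp_le mult_right_mono zero_le_power2)
    show "\<exists>i\<in>UNIV. lo * (y $ i)^2 < lam i * (y $ i)^2"
      using lb(1)[of j] yj2 by (intro bexI[of _ j]) (auto intro: mult_strict_right_mono)
  qed simp
  moreover have "(\<Sum>i\<in>UNIV. lam i * (y $ i)^2) < (\<Sum>i\<in>UNIV. hi * (y $ i)^2)"
  proof (rule sum_strict_mono_ex1)
    show "\<forall>i\<in>UNIV. lam i * (y $ i)^2 \<le> hi * (y $ i)^2"
      using lb(2) by (metis less_imp_le mult_right_mono zero_le_power2)
    show "\<exists>i\<in>UNIV. lam i * (y $ i)^2 < hi * (y $ i)^2"
      using lb(2)[of j] yj2 by (intro bexI[of _ j]) (auto intro: mult_strict_right_mono)
  qed simp
  ultimately show "lo * (x \<bullet> x) < x \<bullet> (A *v x) \<and> x \<bullet> (A *v x) < hi * (x \<bullet> x)"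
    by (simp add: xx xAx yDy yy sum_distrib_left)
qed

lemma alg_core:
  fixes g h a b m00 m10 m11 n00 n01 n11 k :: real
  assumes g: "g > 0" and h: "h > 0" and a: "a \<ge> 0" and b: "b \<ge> 0"
    and gh: "k * (a + b)^2 \<le> 4 * g * h" and m00: "m00 > 0" and n11: "n11 > 0"
    and m10: "m10^2 < k * m00 * n11" and n01: "n01^2 < k * m00 * n11" and k: "k > 0"
  shows "g * m00 + a * m10 + b * n01 + h * n11 > 0"
proof -
  define T where "T = sqrt (k * m00 * n11)"
  have kmn: "k * m00 * n11 > 0" using k m00 n11 by simp
  have T0: "T > 0" using kmn by (simp add: T_def)
  have TT: "T^2 = k * m00 * n11" using kmn by (simp add: T_def)
  have am: "\<bar>m10\<bar> < T" unfolding T_def using m10 by (metis real_sqrt_abs real_sqrt_less_mono)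
  have an: "\<bar>n01\<bar> < T" unfolding T_def using n01 by (metis real_sqrt_abs real_sqrt_less_mono)
  have p: "g * m00 > 0" "h * n11 > 0" using g h m00 n11 by simp_all
  have "((a + b) * T)^2 = k * (a + b)^2 * (m00 * n11)" by (simp only: power_mult_distrib TT) (simp add: algebra_simps)
  also have "\<dots> \<le> 4 * g * h * (m00 * n11)" using gh m00 n11 by (intro mult_right_mono) simp_all
  also have "\<dots> \<le> (g * m00 + h * n11)^2"
  proof -
    have "0 \<le> (g * m00 - h * n11)^2" by simp
    moreover have "(g * m00 + h * n11)^2 = (g * m00 - h * n11)^2 + 4 * g * h * (m00 * n11)"
      by (simp add: power2_eq_square algebra_simps)
    ultimately show ?thesis by linarith
  qed
  finally have sq: "((a + b) * T)^2 \<le> (g * m00 + h * n11)^2" .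
  have le: "(a + b) * T \<le> g * m00 + h * n11"
    by (rule power2_le_imp_le[OF sq]) (use p in linarith)
  show ?thesis
  proof (cases "a + b = 0")
    case True
    hence "a = 0" "b = 0" using a b by simp_all
    thus ?thesis using p by simp
  next
    case False
    have "- (a * m10) \<le> \<bar>a * m10\<bar>" by (rule abs_ge_minus_self)
    hence "- (a * m10) \<le> a * \<bar>m10\<bar>" using a by (simp add: abs_mult)
    moreover have "- (b * n01) \<le> \<bar>b * n01\<bar>" by (rule abs_ge_minus_self)
    hence "- (b * n01) \<le> b * \<bar>n01\<bar>" using b by (simp add: abs_mult)
    moreover have "a * \<bar>m10\<bar> + b * \<bar>n01\<bar> < (a + b) * T"
    proof -
      have "a * \<bar>m10\<bar> \<le> a * T" using a am by (intro mult_left_mono) simp_all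
      moreover have "b * \<bar>n01\<bar> \<le> b * T" using b an by (intro mult_left_mono) simp_all
      moreover have "a > 0 \<or> b > 0" using a b False by linarith
      moreover have "a > 0 \<Longrightarrow> a * \<bar>m10\<bar> < a * T" using am by simp
      moreover have "b > 0 \<Longrightarrow> b * \<bar>n01\<bar> < b * T" using an by simp
      moreover have "(a + b) * T = a * T + b * T" by (simp add: distrib_right)
      ultimately show ?thesis by linarith
    qed
    ultimately show ?thesis using le by linarith
  qed
qed

lemma cs_form:
  fixes A :: "real^'n^'n"
  assumes sym: "transpose A = A" and pd: "\<And>v. v \<noteq> 0 \<Longrightarrow> v \<bullet> (A *v v) > 0"
  shows "(u \<bullet> (A *v v))^2 \<le> (u \<bullet> (A *v u)) * (v \<bullet> (A *v v))"
proof (cases "v = 0")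
  case True thus ?thesis by simp
next
  case False
  define c where "c = v \<bullet> (A *v v)"
  define bb where "bb = v \<bullet> (A *v u)"
  define aa where "aa = u \<bullet> (A *v u)"
  have c0: "c > 0" using pd[OF False] by (simp add: c_def)
  have ub: "u \<bullet> (A *v v) = bb" unfolding bb_def using sym_dot[OF sym, of u v]
    by (simp add: inner_commute)
  have nn: "0 \<le> (u + t *\<^sub>R v) \<bullet> (A *v (u + t *\<^sub>R v))" for t
    using pd[of "u + t *\<^sub>R v"] by (cases "u + t *\<^sub>R v = 0") auto
  have "0 \<le> aa + 2 * (- bb / c) * bb + (- bb / c)^2 * c"
    using nn[of "- bb / c"] unfolding quad_expand[OF sym] aa_def bb_def c_def .
  also have "\<dots> = aa - bb^2 / c" using c0 by (simp add: power2_eq_square field_simps)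
  finally have "bb^2 / c \<le> aa" by simp
  hence "bb^2 \<le> aa * c" using c0 by (simp add: divide_le_eq)
  thus ?thesis using ub aa_def c_def by simp
qed

lemma inv_facts:
  fixes A :: "real^'n^'n"
  assumes sym: "transpose A = A" and lo: "0 < lo"
    and eigb: "\<And>c. is_eigenvalue A c \<Longrightarrow> lo < c \<and> c < hi"
  shows "A *v (matrix_inv A *v x) = x"
    and "x \<noteq> 0 \<Longrightarrow> (x \<bullet> x) / hi < x \<bullet> (matrix_inv A *v x) \<and> x \<bullet> (matrix_inv A *v x) < (x \<bullet> x) / lo"
    and "x \<bullet> (matrix_inv A *v z) = z \<bullet> (matrix_inv A *v x)"
    and "(x \<bullet> (matrix_inv A *v z))^2 \<le> (x \<bullet> (matrix_inv A *v x)) * (z \<bullet> (matrix_inv A *v z))"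
proof -
  have sb1: "lo ^ CARD('n) < det A \<and> det A < hi ^ CARD('n)"
    by (rule spec_bounds(1)[OF sym lo]) (rule eigb)
  have sb2: "lo * (v \<bullet> v) < v \<bullet> (A *v v) \<and> v \<bullet> (A *v v) < hi * (v \<bullet> v)" if "v \<noteq> 0" for v
    by (rule spec_bounds(2)[OF sym lo]) (rule eigb, assumption, rule that)
  have detpos: "det A > 0" using sb1 lo by (meson order.strict_trans zero_less_power)
  hence "invertible A" by (simp add: invertible_det_nz)
  hence inv: "A ** matrix_inv A = mat 1 \<and> matrix_inv A ** A = mat 1"
    unfolding invertible_def matrix_inv_def by (rule someI_ex)
  have AAi: "A *v (matrix_inv A *v y) = y" for y
    by (simp add: matrix_vector_mul_assoc inv)
  show "A *v (matrix_inv A *v x) = x" by (rule AAi)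
  have pd: "v \<bullet> (A *v v) > 0" if "v \<noteq> 0" for v
  proof -
    have "lo * (v \<bullet> v) < v \<bullet> (A *v v)" using sb2[OF that] by simp
    moreover have "v \<bullet> v > 0" using that by simp
    ultimately show ?thesis using lo by (smt (verit) mult_pos_pos)
  qed
  have form: "y \<bullet> (matrix_inv A *v w) = (matrix_inv A *v y) \<bullet> (A *v (matrix_inv A *v w))" for y w
  proof -
    have "y \<bullet> (matrix_inv A *v w) = (A *v (matrix_inv A *v y)) \<bullet> (matrix_inv A *v w)" by (simp add: AAi)
    also have "\<dots> = (matrix_inv A *v y) \<bullet> (A *v (matrix_inv A *v w))" by (rule sym_dot[OF sym])
    finally show ?thesis .
  qed
  show symi: "x \<bullet> (matrix_inv A *v z) = z \<bullet> (matrix_inv A *v x)"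
  proof -
    have "x \<bullet> (matrix_inv A *v z) = (matrix_inv A *v x) \<bullet> z" using form[of x z] by (simp only: AAi)
    thus ?thesis by (simp add: inner_commute)
  qed
  show "(x \<bullet> (matrix_inv A *v z))^2 \<le> (x \<bullet> (matrix_inv A *v x)) * (z \<bullet> (matrix_inv A *v z))"
    unfolding form by (rule cs_form[OF sym pd])
  assume x0: "x \<noteq> 0"
  define y where "y = matrix_inv A *v x"
  have Ay: "A *v y = x" by (simp add: y_def AAi)
  have y0: "y \<noteq> 0" using x0 Ay by auto
  define s where "s = x \<bullet> y"
  have s_eq: "s = y \<bullet> (A *v y)" by (simp add: s_def Ay inner_commute)
  have xx: "x \<bullet> x > 0" using x0 by simp
  have yy: "y \<bullet> y > 0" using y0 by simp
  have s1: "lo * (y \<bullet> y) < s" "s < hi * (y \<bullet> y)" using sb2[OF y0] s_eq by simp_all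
  have spos: "s > 0" using s1(1) lo yy by (smt (verit) mult_pos_pos)
  have cs1: "s^2 \<le> (x \<bullet> x) * (y \<bullet> y)"
    unfolding s_def by (metis Cauchy_Schwarz_ineq inner_commute power2_eq_square)
  have "s^2 < (x \<bullet> x) * (s / lo)"
  proof -
    have "y \<bullet> y < s / lo" using s1(1) lo by (simp add: field_simps)
    thus ?thesis using cs1 xx by (smt (verit) mult_strict_left_mono)
  qed
  hence "s * s < s * ((x \<bullet> x) / lo)" by (simp add: power2_eq_square algebra_simps)
  hence up: "s < (x \<bullet> x) / lo" using spos mult_less_cancel_left_pos by blast
  have "(x \<bullet> (A *v y))^2 \<le> (x \<bullet> (A *v x)) * (y \<bullet> (A *v y))" by (rule cs_form[OF sym pd])
  hence "(x \<bullet> x)^2 \<le> (x \<bullet> (A *v x)) * s" by (simp add: Ay s_eq)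
  also have "\<dots> < (hi * (x \<bullet> x)) * s" using sb2[OF x0] spos by (intro mult_strict_right_mono) simp_all
  finally have "(x \<bullet> x) * (x \<bullet> x) < (x \<bullet> x) * (hi * s)" by (simp add: power2_eq_square algebra_simps)
  hence "x \<bullet> x < hi * s" using xx by simp
  moreover have "hi > 0"
  proof -
    have "0 < hi * (y \<bullet> y)" using s1 spos by linarith
    thus ?thesis using yy by (simp add: zero_less_mult_iff)
  qed
  ultimately have "(x \<bullet> x) / hi < s" by (simp add: pos_divide_less_eq mult.commute)
  thus "(x \<bullet> x) / hi < x \<bullet> (matrix_inv A *v x) \<and> x \<bullet> (matrix_inv A *v x) < (x \<bullet> x) / lo"
    using up by (simp add: s_def y_def)
qed

lemma key_ratio:
  fixes dA dB p q s lo hi :: real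
  assumes "lo^n < dA" "dA < hi^n" "lo^n < dB" "s/hi < p" "p < s/lo" "s/hi < q"
    "s > 0" "lo > 0" "lo < hi"
  shows "dA * p < (hi/lo)^(n+1) * (dB * q)"
proof -
  have hi: "hi > 0" using assms by linarith
  have p0: "p > 0" using assms hi by (smt (verit) divide_pos_pos)
  have dA0: "dA > 0" using assms by (smt (verit) zero_less_power)
  have dB0: "dB > 0" using assms by (smt (verit) zero_less_power)
  have "dA * p < hi^n * (s / lo)"
    using assms p0 dA0 by (intro mult_strict_mono) simp_all
  also have "hi^n * (s / lo) = (hi/lo)^(n+1) * (lo^n * (s / hi))"
    using assms hi by (simp add: power_divide field_simps)
  also have "\<dots> < (hi/lo)^(n+1) * (dB * q)"
  proof (intro mult_strict_left_mono)
    show "lo ^ n * (s / hi) < dB * q"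
      using assms hi dB0 by (intro mult_strict_mono) (simp_all add: less_imp_le)
    show "0 < (hi / lo) ^ (n + 1)" using assms hi by simp
  qed
  finally show ?thesis .
qed

lemma pointwise:
  fixes A B :: "real^'n^'n" and x0 x1 :: "real^'n"
  assumes symA: "transpose A = A" and symB: "transpose B = B" and lo: "0 < lo"
    and eigA: "\<And>c. is_eigenvalue A c \<Longrightarrow> lo < c \<and> c < hi"
    and eigB: "\<And>c. is_eigenvalue B c \<Longrightarrow> lo < c \<and> c < hi"
    and g: "g > 0" and h: "h > 0" and a: "a \<ge> 0" and b: "b \<ge> 0"
    and gh: "(hi/lo)^(CARD('n)+1) * (a+b)^2 \<le> 4*g*h"
    and nz: "x0 \<noteq> 0 \<or> x1 \<noteq> 0"
  shows "g * det A * (x0 \<bullet> (matrix_inv A *v x0)) + a * det A * (x1 \<bullet> (matrix_inv A *v x0))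
       + b * det B * (x0 \<bullet> (matrix_inv B *v x1)) + h * det B * (x1 \<bullet> (matrix_inv B *v x1)) > 0"
proof -
  define k where "k = (hi/lo)^(CARD('n)+1)"
  obtain P :: "real^'n^'n" and lam where "is_eigenvalue A (lam undefined)"
    using spec_decomp[OF symA] by metis
  hence lohi: "lo < hi" using eigA by fastforce
  have hi: "hi > 0" using lo lohi by linarith
  have k: "k > 0" using lo hi by (simp add: k_def)
  have dA: "lo ^ CARD('n) < det A \<and> det A < hi ^ CARD('n)"
    by (rule spec_bounds(1)[OF symA lo]) (rule eigA)
  have dB: "lo ^ CARD('n) < det B \<and> det B < hi ^ CARD('n)"
    by (rule spec_bounds(1)[OF symB lo]) (rule eigB)
  have dA0: "det A > 0" using dA lo by (smt (verit) zero_less_power)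
  have dB0: "det B > 0" using dB lo by (smt (verit) zero_less_power)
  have qA: "(x \<bullet> x) / hi < x \<bullet> (matrix_inv A *v x) \<and> x \<bullet> (matrix_inv A *v x) < (x \<bullet> x) / lo" if "x \<noteq> 0" for x
    by (rule inv_facts(2)[OF symA lo, of hi]) (rule eigA, assumption, rule that)
  have qB: "(x \<bullet> x) / hi < x \<bullet> (matrix_inv B *v x) \<and> x \<bullet> (matrix_inv B *v x) < (x \<bullet> x) / lo" if "x \<noteq> 0" for x
    by (rule inv_facts(2)[OF symB lo, of hi]) (rule eigB, assumption, rule that)
  have csA: "(x \<bullet> (matrix_inv A *v z))^2 \<le> (x \<bullet> (matrix_inv A *v x)) * (z \<bullet> (matrix_inv A *v z))" for x z
    by (rule inv_facts(4)[OF symA lo, of hi]) (rule eigA)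
  have csB: "(x \<bullet> (matrix_inv B *v z))^2 \<le> (x \<bullet> (matrix_inv B *v x)) * (z \<bullet> (matrix_inv B *v z))" for x z
    by (rule inv_facts(4)[OF symB lo, of hi]) (rule eigB)
  have qApos: "x \<bullet> (matrix_inv A *v x) > 0" if "x \<noteq> 0" for x
    using qA[OF that] that hi by (smt (verit) divide_pos_pos inner_gt_zero_iff)
  have qBpos: "x \<bullet> (matrix_inv B *v x) > 0" if "x \<noteq> 0" for x
    using qB[OF that] that hi by (smt (verit) divide_pos_pos inner_gt_zero_iff)
  consider "x1 = 0" | "x0 = 0" | "x0 \<noteq> 0" "x1 \<noteq> 0" by blast
  then show ?thesis
  proof cases
    case 1
    hence "x0 \<noteq> 0" using nz by simp
    thus ?thesis using 1 g dA0 qApos[of x0] by simp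
  next
    case 2
    hence "x1 \<noteq> 0" using nz by simp
    thus ?thesis using 2 h dB0 qBpos[of x1] by simp
  next
    case 3
    define m00 where "m00 = det A * (x0 \<bullet> (matrix_inv A *v x0))"
    define m10 where "m10 = det A * (x1 \<bullet> (matrix_inv A *v x0))"
    define m11 where "m11 = det A * (x1 \<bullet> (matrix_inv A *v x1))"
    define n00 where "n00 = det B * (x0 \<bullet> (matrix_inv B *v x0))"
    define n01 where "n01 = det B * (x0 \<bullet> (matrix_inv B *v x1))"
    define n11 where "n11 = det B * (x1 \<bullet> (matrix_inv B *v x1))"
    have m00: "m00 > 0" using dA0 qApos[OF 3(1)] by (simp add: m00_def)
    have n11: "n11 > 0" using dB0 qBpos[OF 3(2)] by (simp add: n11_def)
    have m11: "m11 < k * n11" unfolding m11_def n11_def k_def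
      using qA[OF 3(2)] qB[OF 3(2)] dA dB 3(2) lo lohi
      by (intro key_ratio[where s="x1 \<bullet> x1"]) simp_all
    have n00: "n00 < k * m00" unfolding m00_def n00_def k_def
      using qA[OF 3(1)] qB[OF 3(1)] dA dB 3(1) lo lohi
      by (intro key_ratio[where s="x0 \<bullet> x0"]) simp_all
    have "m10^2 \<le> m11 * m00"
      unfolding m10_def m11_def m00_def using csA[of x1 x0] dA0
      by (simp add: power_mult_distrib power2_eq_square mult_left_mono algebra_simps)
    also have "\<dots> < k * n11 * m00" using m11 m00 by simp
    finally have m10: "m10^2 < k * m00 * n11" by (simp add: algebra_simps)
    have "n01^2 \<le> n00 * n11"
      unfolding n01_def n11_def n00_def using csB[of x0 x1] dB0
      by (simp add: power_mult_distrib power2_eq_square mult_left_mono algebra_simps)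
    also have "\<dots> < k * m00 * n11" using n00 n11 by simp
    finally have n01: "n01^2 < k * m00 * n11" .
    have "g * m00 + a * m10 + b * n01 + h * n11 > 0"
      by (rule alg_core[OF g h a b _ m00 n11 m10 n01 k]) (use gh in \<open>simp add: k_def\<close>)
    thus ?thesis by (simp add: m00_def m10_def n01_def n11_def mult.assoc)
  qed
qed

lemma support_AE:
  fixes \<mu> :: "(real^'p) measure"
  assumes sets: "sets \<mu> = sets borel" and supp: "measure_support \<mu> = U"
  shows "AE u in \<mu>. u \<in> U"
proof -
  define F where "F = {B. \<exists>x e. x \<notin> U \<and> e > 0 \<and> emeasure \<mu> (ball x e) = 0 \<and> B = ball x e}"
  have "\<And>S. S \<in> F \<Longrightarrow> open S" by (auto simp: F_def)
  then obtain F' where F': "F' \<subseteq> F" "countable F'" "\<Union>F' = \<Union>F" by (rule Lindelof)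
  have cov: "- U \<subseteq> \<Union>F"
  proof
    fix x assume "x \<in> - U"
    hence "x \<notin> measure_support \<mu>" using supp by simp
    then obtain e where "e > 0" "\<not> emeasure \<mu> (ball x e) > 0" unfolding measure_support_def by auto
    hence "emeasure \<mu> (ball x e) = 0" by (simp add: not_gr_zero)
    hence "ball x e \<in> F" using \<open>e > 0\<close> \<open>x \<in> - U\<close> unfolding F_def by blast
    moreover have "x \<in> ball x e" using \<open>e > 0\<close> by simp
    ultimately show "x \<in> \<Union>F" by blast
  qed
  have "(\<Union>B\<in>F'. B) \<in> null_sets \<mu>"
  proof (rule null_sets_UN'[OF F'(2)])
    fix B assume "B \<in> F'"
    hence "B \<in> F" using F' by auto
    then obtain x e where "B = ball x e" "emeasure \<mu> (ball x e) = 0" unfolding F_def by blast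
    moreover have "ball x e \<in> sets \<mu>" using sets by simp
    ultimately show "B \<in> null_sets \<mu>" by (simp add: null_sets_def)
  qed
  moreover have "{u \<in> space \<mu>. u \<notin> U} \<subseteq> (\<Union>B\<in>F'. B)" using cov F'(3) by auto
  ultimately show ?thesis by (rule AE_I')
qed


lemma rat_witness:
  fixes g h a b k :: real
  assumes g: "g \<ge> 0" and h: "h > 0" and a: "a \<ge> 0" and b: "b \<ge> 0" and k: "k > 0"
    and lt: "4*g*h < k*(a+b)^2"
  shows "\<exists>r1\<in>\<rat>. \<exists>r2\<in>\<rat>. r2 \<ge> 0 \<and> g \<le> r1 \<and> r2 \<le> a \<and> 4*r1*h < k*(r2+b)^2"
proof -
  define G where "G = 4*g*h"
  have G0: "G \<ge> 0" using g h by (simp add: G_def)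
  define c0 where "c0 = sqrt (G / k)"
  have c00: "c0 \<ge> 0" using G0 k by (simp add: c0_def)
  have c0sq: "c0^2 = G / k" using G0 k by (simp add: c0_def)
  have "G / k < (a+b)^2" using lt k by (simp add: G_def pos_divide_less_eq mult.commute)
  hence "c0 < a + b" unfolding c0_def using a b
    by (metis abs_of_nonneg add_nonneg_nonneg real_sqrt_abs real_sqrt_less_mono)
  obtain r2 where r2: "r2 \<in> \<rat>" "0 \<le> r2" "r2 \<le> a" "c0 < r2 + b"
  proof (cases "c0 < b")
    case True thus ?thesis using that[of 0] a by simp
  next
    case False
    hence "c0 - b < a" using \<open>c0 < a + b\<close> by linarith
    then obtain r where "r \<in> \<rat>" "c0 - b < r" "r < a" using Rats_dense_in_real by blast
    thus ?thesis using that[of r] False by simp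
  qed
  have "c0^2 < (r2 + b)^2" using r2(4) c00 by (intro power_strict_mono) simp_all
  hence "G < k * (r2 + b)^2" using c0sq k by (simp add: pos_divide_less_eq mult.commute)
  hence "g < k * (r2 + b)^2 / (4 * h)" using h by (simp add: G_def pos_less_divide_eq mult.commute mult.left_commute)
  then obtain r1 where r1: "r1 \<in> \<rat>" "g < r1" "r1 < k * (r2 + b)^2 / (4 * h)" using Rats_dense_in_real by blast
  have "4 * r1 * h < k * (r2 + b)^2" using r1(3) h by (simp add: pos_less_divide_eq mult.commute mult.left_commute)
  thus ?thesis using r1 r2 by (intro bexI[of _ r1] bexI[of _ r2]) auto
qed

theorem mainTheorem17:
  fixes U :: "(real^'p) set"
    and \<mu> :: "(real^'p) measure"
    and f :: "nat \<Rightarrow> nat \<Rightarrow> real^'p \<Rightarrow> real"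
    and q :: "nat \<Rightarrow> real^'p \<Rightarrow> real^'p"
    and Dq :: "nat \<Rightarrow> real^'p \<Rightarrow> real^'p^'p"
    and lam_lo lam_hi :: real
  assumes U_compact: "compact U" and U_convex: "convex U"
    and mu_prob: "prob_space \<mu>"
    and mu_sets: "sets \<mu> = sets lborel"
    and mu_ac: "absolutely_continuous lborel \<mu>"
    and mu_support: "measure_support \<mu> = U"
    and f_nonneg: "\<And>d z y. d \<in> {0,1} \<Longrightarrow> z \<in> {0,1} \<Longrightarrow> f d z y \<ge> 0"
    and lam_pos: "0 < lam_lo" and lam_lt: "lam_lo < lam_hi"
    and q_C2: "\<And>d. d \<in> {0,1} \<Longrightarrow> C2_with_jacobian U (q d) (Dq d)"
    and Dq_sym: "\<And>d u. d \<in> {0,1} \<Longrightarrow> u \<in> U \<Longrightarrow> transpose (Dq d u) = Dq d u"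
    and Dq_pd: "\<And>d u x. d \<in> {0,1} \<Longrightarrow> u \<in> U \<Longrightarrow> x \<noteq> 0 \<Longrightarrow> x \<bullet> (Dq d u *v x) > 0"
    and Dq_eig: "\<And>d u c. d \<in> {0,1} \<Longrightarrow> u \<in> U \<Longrightarrow> is_eigenvalue (Dq d u) c
                    \<Longrightarrow> lam_lo < c \<and> c < lam_hi"
    and null_corr: "\<And>d A. d \<in> {0,1} \<Longrightarrow> A \<in> sets \<mu> \<Longrightarrow> A \<subseteq> U \<Longrightarrow>
                    (A \<in> null_sets \<mu> \<longleftrightarrow> q d ` A \<in> null_sets lebesgue)"
    and ineq: "AE y in (lborel :: ((real^'p) \<times> (real^'p)) measure).
                 (fst y \<in> q 0 ` U \<and> snd y \<in> q 1 ` U) \<longrightarrow>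
                 4 * f 0 0 (fst y) * f 1 1 (snd y)
                   > (lam_hi / lam_lo) ^ (CARD('p) + 1) * (f 0 1 (fst y) + f 1 0 (snd y))\<^sup>2"
  shows "AE u in \<mu>. \<forall>\<xi> :: nat \<Rightarrow> real^'p. (\<xi> 0 \<noteq> 0 \<or> \<xi> 1 \<noteq> 0) \<longrightarrow>
           (\<Sum>d\<in>{0,1}. \<Sum>z\<in>{0,1::nat}.
              f d z (q d u) * det (Dq d u) * (\<xi> z \<bullet> (matrix_inv (Dq d u) *v \<xi> d))) > 0"
proof -
  interpret P: prob_space \<mu> by (rule mu_prob)
  define k where "k = (lam_hi / lam_lo) ^ (CARD('p) + 1)"
  have k0: "k > 0" using lam_pos lam_lt by (simp add: k_def)
  have setsb: "sets \<mu> = sets borel" using mu_sets by simp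
  have AEU: "AE u in \<mu>. u \<in> U" by (rule support_AE[OF setsb mu_support])
  have cont: "continuous_on U (q d)" if "d \<in> {0,1}" for d
  proof -
    have "\<forall>u\<in>U. (q d has_derivative (\<lambda>h. Dq d u *v h)) (at u within U)"
      using q_C2[OF that] by (simp add: C2_with_jacobian_def)
    thus ?thesis unfolding continuous_on_eq_continuous_within
      using has_derivative_continuous by blast
  qed
  have Ub: "U \<in> sets borel" using U_compact by (simp add: compact_imp_closed)
  have nullify: "\<exists>N\<in>null_sets \<mu>. X \<subseteq> N"
    if d: "d \<in> {0,1}" and XU: "X \<subseteq> U" and qX: "q d ` X \<subseteq> Z" and Z: "Z \<in> null_sets lborel" for d X Z
  proof -
    define A where "A = q d -` Z \<inter> U"
    have Zb: "Z \<in> sets borel" using null_setsD2[OF Z] by simp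
    have "q d -` Z \<inter> space (restrict_space borel U) \<in> sets (restrict_space borel U)"
      by (rule measurable_sets[OF borel_measurable_continuous_on_restrict[OF cont[OF d]] Zb])
    hence Ab: "A \<in> sets borel" using Ub by (simp add: A_def sets_restrict_space_iff)
    have "q d ` A \<subseteq> Z" by (auto simp: A_def)
    hence "q d ` A \<in> null_sets lebesgue"
      by (rule null_sets_completion_subset) (rule null_sets_completionI[OF Z])
    hence "A \<in> null_sets \<mu>" using null_corr[OF d] Ab mu_sets by (simp add: A_def)
    moreover have "X \<subseteq> A" using XU qX by (auto simp: A_def)
    ultimately show ?thesis by blast
  qed
  have small: "AE u in \<mu>. u \<notin> S" if "\<exists>N\<in>null_sets \<mu>. S \<subseteq> N" for S
    using that by (auto intro: AE_I')
  have notnullU: "\<not> (\<exists>N\<in>null_sets \<mu>. U \<subseteq> N)"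
  proof
    assume "\<exists>N\<in>null_sets \<mu>. U \<subseteq> N"
    hence "AE u in \<mu>. u \<notin> U" by (rule small)
    with AEU have "AE u in \<mu>. False" by eventually_elim simp
    thus False by simp
  qed
  obtain Nb where Nb: "Nb \<in> null_sets (lborel :: ((real^'p) \<times> (real^'p)) measure)"
    and badNb: "\<And>y. \<not> ((fst y \<in> q 0 ` U \<and> snd y \<in> q 1 ` U) \<longrightarrow>
                 4 * f 0 0 (fst y) * f 1 1 (snd y)
                   > (lam_hi / lam_lo) ^ (CARD('p) + 1) * (f 0 1 (fst y) + f 1 0 (snd y))\<^sup>2) \<Longrightarrow> y \<in> Nb"
  proof -
    from ineq obtain N where "{x \<in> space lborel. \<not> ((fst x \<in> q 0 ` U \<and> snd x \<in> q 1 ` U) \<longrightarrow>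
                 4 * f 0 0 (fst x) * f 1 1 (snd x)
                   > (lam_hi / lam_lo) ^ (CARD('p) + 1) * (f 0 1 (fst x) + f 1 0 (snd x))\<^sup>2)} \<subseteq> N"
      "emeasure lborel N = 0" "N \<in> sets lborel" by (rule AE_E)
    thus ?thesis using that[of N] by (auto simp: null_sets_def)
  qed
  have badpair: "(q 0 u, q 1 v) \<in> Nb"
    if "u \<in> U" "v \<in> U" "\<not> (4 * f 0 0 (q 0 u) * f 1 1 (q 1 v) > k * (f 0 1 (q 0 u) + f 1 0 (q 1 v))\<^sup>2)" for u v
    using that by (intro badNb) (auto simp: k_def)
  have rect: "(\<exists>N\<in>null_sets \<mu>. Ps \<subseteq> N) \<or> (\<exists>N\<in>null_sets \<mu>. Qs \<subseteq> N)"
    if PU: "Ps \<subseteq> U" and QU: "Qs \<subseteq> U" and PQ: "\<And>u v. u \<in> Ps \<Longrightarrow> v \<in> Qs \<Longrightarrow> (q 0 u, q 1 v) \<in> Nb"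
    for Ps Qs
  proof -
    have "AE z in (lborel \<Otimes>\<^sub>M lborel :: ((real^'p) \<times> (real^'p)) measure). z \<notin> Nb"
      using Nb by (simp add: lborel_prod AE_not_in)
    hence "AE x in lborel. AE y in lborel. (x, y) \<notin> Nb" by (rule lborel_pair.AE_pair)
    then obtain Z0 where Z0: "{x \<in> space lborel. \<not> (AE y in lborel. (x, y) \<notin> Nb)} \<subseteq> Z0"
      "emeasure lborel Z0 = 0" "Z0 \<in> sets lborel" by (rule AE_E)
    have Z0n: "Z0 \<in> null_sets lborel" using Z0 by (simp add: null_sets_def)
    show ?thesis
    proof (cases "q 0 ` Ps \<subseteq> Z0")
      case True
      thus ?thesis using nullify[of 0 Ps Z0] PU Z0n by auto
    next
      case False
      then obtain u where u: "u \<in> Ps" "q 0 u \<notin> Z0" by auto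
      hence "AE y in lborel. (q 0 u, y) \<notin> Nb" using Z0(1) by auto
      then obtain Z1 where Z1: "{y \<in> space lborel. \<not> ((q 0 u, y) \<notin> Nb)} \<subseteq> Z1"
        "emeasure lborel Z1 = 0" "Z1 \<in> sets lborel" by (rule AE_E)
      have Z1n: "Z1 \<in> null_sets lborel" using Z1 by (simp add: null_sets_def)
      have "q 1 ` Qs \<subseteq> Z1" using Z1(1) PQ[OF u(1)] by auto
      thus ?thesis using nullify[of 1 Qs Z1] QU Z1n by auto
    qed
  qed
  have fnn: "f d z y \<ge> 0" if "d \<in> {0,1}" "z \<in> {0,1}" for d z y using f_nonneg that by blast
  have AE1: "AE u in \<mu>. u \<notin> {u\<in>U. f 0 0 (q 0 u) = 0}"
  proof (rule small)
    have "(\<exists>N\<in>null_sets \<mu>. {u\<in>U. f 0 0 (q 0 u) = 0} \<subseteq> N) \<or> (\<exists>N\<in>null_sets \<mu>. U \<subseteq> N)"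
    proof (rule rect)
      fix u v assume "u \<in> {u\<in>U. f 0 0 (q 0 u) = 0}" "v \<in> U"
      thus "(q 0 u, q 1 v) \<in> Nb" using k0 by (intro badpair) (auto simp: not_less)
    qed auto
    thus "\<exists>N\<in>null_sets \<mu>. {u\<in>U. f 0 0 (q 0 u) = 0} \<subseteq> N" using notnullU by blast
  qed
  have AE2: "AE u in \<mu>. u \<notin> {u\<in>U. f 1 1 (q 1 u) = 0}"
  proof (rule small)
    have "(\<exists>N\<in>null_sets \<mu>. U \<subseteq> N) \<or> (\<exists>N\<in>null_sets \<mu>. {u\<in>U. f 1 1 (q 1 u) = 0} \<subseteq> N)"
    proof (rule rect)
      fix u v assume "u \<in> U" "v \<in> {u\<in>U. f 1 1 (q 1 u) = 0}"
      thus "(q 0 u, q 1 v) \<in> Nb" using k0 by (intro badpair) (auto simp: not_less)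
    qed auto
    thus "\<exists>N\<in>null_sets \<mu>. {u\<in>U. f 1 1 (q 1 u) = 0} \<subseteq> N" using notnullU by blast
  qed
  define Ps where "Ps r1 r2 = {u\<in>U. f 0 0 (q 0 u) \<le> r1 \<and> r2 \<le> f 0 1 (q 0 u)}" for r1 r2 :: real
  define Qs where "Qs r1 r2 = {v\<in>U. 4 * r1 * f 1 1 (q 1 v) < k * (r2 + f 1 0 (q 1 v))\<^sup>2}" for r1 r2 :: real
  have AE3': "AE u in \<mu>. u \<notin> Ps r1 r2 \<inter> Qs r1 r2" if r2: "r2 \<ge> 0" for r1 r2
  proof (rule small)
    have "(\<exists>N\<in>null_sets \<mu>. Ps r1 r2 \<subseteq> N) \<or> (\<exists>N\<in>null_sets \<mu>. Qs r1 r2 \<subseteq> N)"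
    proof (rule rect)
      fix u v assume u: "u \<in> Ps r1 r2" and v: "v \<in> Qs r1 r2"
      define gg where "gg = f 0 0 (q 0 u)"
      define aa where "aa = f 0 1 (q 0 u)"
      define bb where "bb = f 1 0 (q 1 v)"
      define hh where "hh = f 1 1 (q 1 v)"
      have hh0: "hh \<ge> 0" and bb0: "bb \<ge> 0" using fnn by (auto simp: hh_def bb_def)
      have "4 * gg * hh \<le> 4 * r1 * hh" using u hh0 by (auto simp: Ps_def gg_def intro: mult_right_mono)
      also have "\<dots> < k * (r2 + bb)\<^sup>2" using v by (simp add: Qs_def hh_def bb_def)
      also have "\<dots> \<le> k * (aa + bb)\<^sup>2"
        using u r2 bb0 k0 by (intro mult_left_mono power_mono) (auto simp: Ps_def aa_def)
      finally have "\<not> (4 * gg * hh > k * (aa + bb)\<^sup>2)" by simp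
      thus "(q 0 u, q 1 v) \<in> Nb" using u v
        by (intro badpair) (auto simp: Ps_def Qs_def gg_def hh_def aa_def bb_def)
    qed (auto simp: Ps_def Qs_def)
    thus "\<exists>N\<in>null_sets \<mu>. Ps r1 r2 \<inter> Qs r1 r2 \<subseteq> N" by blast
  qed
  have AE3: "AE u in \<mu>. \<forall>r1\<in>\<rat>. \<forall>r2\<in>\<rat>. r2 \<ge> 0 \<longrightarrow> u \<notin> Ps r1 r2 \<inter> Qs r1 r2"
  proof (subst AE_ball_countable[OF countable_rat], intro ballI)
    fix r1 :: real
    show "AE u in \<mu>. \<forall>r2\<in>\<rat>. r2 \<ge> 0 \<longrightarrow> u \<notin> Ps r1 r2 \<inter> Qs r1 r2"
    proof (subst AE_ball_countable[OF countable_rat], intro ballI)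
      fix r2 :: real
      show "AE u in \<mu>. r2 \<ge> 0 \<longrightarrow> u \<notin> Ps r1 r2 \<inter> Qs r1 r2"
        by (cases "r2 \<ge> 0") (use AE3' in auto)
    qed
  qed
  show ?thesis using AEU AE1 AE2 AE3
  proof eventually_elim
    case (elim u)
    define gg where "gg = f 0 0 (q 0 u)"
    define aa where "aa = f 0 1 (q 0 u)"
    define bb where "bb = f 1 0 (q 1 u)"
    define hh where "hh = f 1 1 (q 1 u)"
    have gg: "gg > 0" using elim fnn[of 0 0 "q 0 u"] by (auto simp: gg_def)
    have hh: "hh > 0" using elim fnn[of 1 1 "q 1 u"] by (auto simp: hh_def)
    have aa: "aa \<ge> 0" and bb: "bb \<ge> 0" using fnn by (auto simp: aa_def bb_def)
    have ineqk: "k * (aa + bb)^2 \<le> 4 * gg * hh"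
    proof (rule ccontr)
      assume "\<not> ?thesis"
      hence "4 * gg * hh < k * (aa + bb)^2" by simp
      from rat_witness[OF less_imp_le[OF gg] hh aa bb k0 this] obtain r1 r2 where
        r: "r1 \<in> \<rat>" "r2 \<in> \<rat>" "r2 \<ge> 0" "gg \<le> r1" "r2 \<le> aa" "4 * r1 * hh < k * (r2 + bb)^2" by blast
      have "u \<in> Ps r1 r2 \<inter> Qs r1 r2" using r elim(1)
        by (simp add: Ps_def Qs_def gg_def aa_def bb_def hh_def)
      thus False using elim(4) r by blast
    qed
    show ?case
    proof (intro allI impI)
      fix \<xi> :: "nat \<Rightarrow> real^'p" assume nz: "\<xi> 0 \<noteq> 0 \<or> \<xi> 1 \<noteq> 0"
      have d0: "(0::nat) \<in> {0,1}" and d1: "(1::nat) \<in> {0,1}" by simp_all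
      have "gg * det (Dq 0 u) * (\<xi> 0 \<bullet> (matrix_inv (Dq 0 u) *v \<xi> 0)) + aa * det (Dq 0 u) * (\<xi> 1 \<bullet> (matrix_inv (Dq 0 u) *v \<xi> 0))
       + bb * det (Dq 1 u) * (\<xi> 0 \<bullet> (matrix_inv (Dq 1 u) *v \<xi> 1)) + hh * det (Dq 1 u) * (\<xi> 1 \<bullet> (matrix_inv (Dq 1 u) *v \<xi> 1)) > 0"
      proof (rule pointwise[OF Dq_sym[OF d0 elim(1)] Dq_sym[OF d1 elim(1)] lam_pos _ _ gg hh aa bb _ nz])
        show "\<And>c. is_eigenvalue (Dq 0 u) c \<Longrightarrow> lam_lo < c \<and> c < lam_hi" using Dq_eig[OF d0 elim(1)] .
        show "\<And>c. is_eigenvalue (Dq 1 u) c \<Longrightarrow> lam_lo < c \<and> c < lam_hi" using Dq_eig[OF d1 elim(1)] .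
        show "(lam_hi / lam_lo) ^ (CARD('p) + 1) * (aa + bb)\<^sup>2 \<le> 4 * gg * hh" using ineqk by (simp add: k_def)
      qed
      thus "(\<Sum>d\<in>{0,1}. \<Sum>z\<in>{0,1::nat}.
              f d z (q d u) * det (Dq d u) * (\<xi> z \<bullet> (matrix_inv (Dq d u) *v \<xi> d))) > 0"
        by (simp add: gg_def aa_def bb_def hh_def add.assoc)
    qed
  qed
qed

end
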